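(* Let $n\ge1$, $X=\{1,\dots,n\}$, $\mathcal{A}$ the algebra of all functions $X\to\mathbb{R}$ with pointwise operations, $\sigma:X\to X$ a bijection and $\tilde{\sigma}(f)=f\circ\sigma^{-1}$. In the skew polynomial ring $\mathcal{A}[x,\tilde{\sigma},0]$, the centralizer of $\mathcal{A}$ is $$C(\mathcal{A})=\Big\{\sum_{k=0}^m f_kx^k : m\ge0,\ f_k\in\mathcal{A},\ f_k=0 \text{ on } Sep^k(X) \text{ for all } k\Big\}.$$
   Context: For a ring $R$ with endomorphism $\sigma$ and $\sigma$-derivation $\Delta$ (additive map with $\Delta(ab)=\sigma(a)\Delta(b)+\Delta(a)b$), the Ore extension $R[x,\sigma,\Delta]$ is the ring generated by $R$ and an element $x$ such that $1,x,x^2,\dots$ is a basis of it as a left $R$-module and $xr=\sigma(r)x+\Delta(r)$ for all $r\in R$; $R[x,\sigma,0]$ is the case $\Delta=0$. The centralizer of a subset $T$ is the set of elements commuting with every element of $T$. For an integer $k$, $Sep^k(X)=\{p\in X: \sigma^k(p)\neq p\}$ (so $Sep^0(X)=\emptyset$). *)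

theory Defs
  imports Complex_Main
begin

text \<open>The algebra A of all real functions on a finite set X (modelled by a finite type 'n,
  so n = CARD('n) \<ge> 1 automatically), with pointwise operations.
  An element sum_{k} f_k x^k of the skew polynomial ring A[x, sig, 0] is represented by its
  coefficient sequence k \<mapsto> f_k, which must have finite support.\<close>

definition skew_polys :: "(nat \<Rightarrow> 'n \<Rightarrow> real) set" where
  "skew_polys = {p. finite {k. p k \<noteq> (\<lambda>_. 0)}}"

text \<open>Multiplication in the Ore extension R[x, sig, 0] with R = A: determined by
  (f x^k)(g x^l) = f sig^k(g) x^(k+l), i.e. x r = sig(r) x.\<close>
definition skew_mult ::
  "(('n \<Rightarrow> real) \<Rightarrow> ('n \<Rightarrow> real)) \<Rightarrow> (nat \<Rightarrow> 'n \<Rightarrow> real) \<Rightarrow> (nat \<Rightarrow> 'n \<Rightarrow> real) \<Rightarrow> (nat \<Rightarrow> 'n \<Rightarrow> real)" where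
  "skew_mult sig p q = (\<lambda>m t. \<Sum>k\<le>m. p k t * (sig ^^ k) (q (m - k)) t)"

definition skew_const :: "('n \<Rightarrow> real) \<Rightarrow> (nat \<Rightarrow> 'n \<Rightarrow> real)" where
  "skew_const a = (\<lambda>k. if k = 0 then a else (\<lambda>_. 0))"

definition centralizer_A :: "(('n \<Rightarrow> real) \<Rightarrow> ('n \<Rightarrow> real)) \<Rightarrow> (nat \<Rightarrow> 'n \<Rightarrow> real) set" where
  "centralizer_A sig = {p \<in> skew_polys. \<forall>a. skew_mult sig p (skew_const a) = skew_mult sig (skew_const a) p}"

definition Sep :: "('n \<Rightarrow> 'n) \<Rightarrow> nat \<Rightarrow> 'n set" where
  "Sep \<sigma> k = {t. (\<sigma> ^^ k) t \<noteq> t}"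

end

theory Submission
  imports Defs
begin

lemma funpow_comp_inv:
  "((\<lambda>f. f \<circ> g) ^^ k) (f::'a \<Rightarrow> 'b) = f \<circ> ((g::'a \<Rightarrow> 'a) ^^ k)"
proof (induction k)
  case (Suc k)
  have "((\<lambda>f. f \<circ> g) ^^ Suc k) f = ((\<lambda>f. f \<circ> g) ^^ k) f \<circ> g" by simp
  also have "\<dots> = f \<circ> (g ^^ k \<circ> g)" by (subst Suc.IH) (rule comp_assoc)
  also have "\<dots> = f \<circ> (g ^^ Suc k)" by (simp only: funpow_Suc_right)
  finally show ?case .
qed simp

lemma fp_cancel1:
  assumes "bij (\<sigma>::'a\<Rightarrow>'a)" shows "(\<sigma> ^^ m) ((inv \<sigma> ^^ m) t) = t"
proof (induction m arbitrary: t)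
  case (Suc m)
  have "(\<sigma> ^^ Suc m) ((inv \<sigma> ^^ Suc m) t) = (\<sigma> ^^ m) (\<sigma> (inv \<sigma> ((inv \<sigma> ^^ m) t)))"
    by (simp only: funpow_Suc_right[of m \<sigma>] funpow.simps(2)[of m "inv \<sigma>"] comp_def)
  also have "\<dots> = t" using Suc assms by (simp add: bij_is_surj surj_f_inv_f)
  finally show ?case .
qed simp

lemma fp_cancel2:
  assumes "bij (\<sigma>::'a\<Rightarrow>'a)" shows "(inv \<sigma> ^^ m) ((\<sigma> ^^ m) t) = t"
proof (induction m arbitrary: t)
  case (Suc m)
  have "(inv \<sigma> ^^ Suc m) ((\<sigma> ^^ Suc m) t) = (inv \<sigma> ^^ m) (inv \<sigma> (\<sigma> ((\<sigma> ^^ m) t)))"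
    by (simp only: funpow_Suc_right[of m "inv \<sigma>"] funpow.simps(2)[of m \<sigma>] comp_def)
  also have "\<dots> = t" using Suc assms by (simp add: bij_is_inj inv_f_f)
  finally show ?case .
qed simp

lemma mult_r:
  "skew_mult (\<lambda>f. f \<circ> g) p (skew_const a) m t = p m t * a ((g ^^ m) t)"
proof -
  have "skew_mult (\<lambda>f. f \<circ> g) p (skew_const a) m t
     = (\<Sum>k\<le>m. if k = m then p m t * a ((g ^^ m) t) else 0)"
    unfolding skew_mult_def skew_const_def funpow_comp_inv
    by (intro sum.cong) auto
  then show ?thesis by simp
qed

lemma mult_l:
  "skew_mult (\<lambda>f. f \<circ> g) (skew_const a) p m t = a t * p m t"
proof -
  have "skew_mult (\<lambda>f. f \<circ> g) (skew_const a) p m t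
     = (\<Sum>k\<le>m. if k = 0 then a t * p m t else 0)"
    unfolding skew_mult_def skew_const_def funpow_comp_inv
    by (intro sum.cong) auto
  then show ?thesis by simp
qed

theorem theorem3:
  fixes \<sigma> :: "'n::finite \<Rightarrow> 'n"
  assumes "bij \<sigma>"
  shows "centralizer_A (\<lambda>f. f \<circ> inv \<sigma>) =
    {p \<in> skew_polys. \<forall>k. \<forall>t \<in> Sep \<sigma> k. p k t = 0}"
proof -
  have eq: "(\<forall>a. skew_mult (\<lambda>f. f \<circ> inv \<sigma>) p (skew_const a) = skew_mult (\<lambda>f. f \<circ> inv \<sigma>) (skew_const a) p)
     \<longleftrightarrow> (\<forall>k. \<forall>t \<in> Sep \<sigma> k. p k t = 0)" for p :: "nat \<Rightarrow> 'n \<Rightarrow> real"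
  proof
    assume H: "\<forall>a. skew_mult (\<lambda>f. f \<circ> inv \<sigma>) p (skew_const a) = skew_mult (\<lambda>f. f \<circ> inv \<sigma>) (skew_const a) p"
    show "\<forall>k. \<forall>t \<in> Sep \<sigma> k. p k t = 0"
    proof (intro allI ballI)
      fix k t assume "t \<in> Sep \<sigma> k"
      hence ne: "(\<sigma> ^^ k) t \<noteq> t" by (simp add: Sep_def)
      have ne2: "(inv \<sigma> ^^ k) t \<noteq> t"
        using fp_cancel1[OF assms, of k t] ne by metis
      let ?a = "\<lambda>s. if s = t then 1 else (0::real)"
      have "skew_mult (\<lambda>f. f \<circ> inv \<sigma>) p (skew_const ?a) k t = skew_mult (\<lambda>f. f \<circ> inv \<sigma>) (skew_const ?a) p k t"
        using H by simp
      thus "p k t = 0" unfolding mult_r mult_l using ne2 by simp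
    qed
  next
    assume H: "\<forall>k. \<forall>t \<in> Sep \<sigma> k. p k t = 0"
    show "\<forall>a. skew_mult (\<lambda>f. f \<circ> inv \<sigma>) p (skew_const a) = skew_mult (\<lambda>f. f \<circ> inv \<sigma>) (skew_const a) p"
    proof (intro allI ext)
      fix a m t
      show "skew_mult (\<lambda>f. f \<circ> inv \<sigma>) p (skew_const a) m t = skew_mult (\<lambda>f. f \<circ> inv \<sigma>) (skew_const a) p m t"
        unfolding mult_r mult_l
      proof (cases "(\<sigma> ^^ m) t = t")
        case True
        hence "(inv \<sigma> ^^ m) t = t" using fp_cancel2[OF assms, of m t] by simp
        thus "p m t * a ((inv \<sigma> ^^ m) t) = a t * p m t" by simp
      next
        case False
        hence "p m t = 0" using H by (simp add: Sep_def)
        thus "p m t * a ((inv \<sigma> ^^ m) t) = a t * p m t" by simp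
      qed
    qed
  qed
  show ?thesis unfolding centralizer_A_def using eq by blast
qed

end
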